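(* Let $\alpha_0\in\mathbb R$. Let $M,K$ be the $5\times5$ matrices $$M=\begin{pmatrix}0&\frac12&-\frac12&0&0\\-\frac12&0&0&0&0\\\frac12&0&0&0&0\\0&0&0&0&0\\0&0&0&0&0\end{pmatrix},\quad K=\begin{pmatrix}0&0&0&-1&0\\0&0&0&0&1\\0&0&0&0&0\\1&0&0&0&0\\0&-1&0&0&0\end{pmatrix},$$ let $S(\mathbf z)=-wu-\frac{u^3}{2}-\frac{u\rho^2}{2}+\rho v$ for $\mathbf z=(u,\phi,\rho,v,w)^T$, let $A$ be the $5\times5$ matrix whose only nonzero entries are $A_{12}=A_{21}=\alpha_0$, and $B=0$. Let $\mathbf z_h=(u_h,\phi_h,\rho_h,v_h,w_h)^T$ be continuously differentiable in $t$ with values in $(V_h)^5$ and satisfy, for every $j$ and every $\boldsymbol\varphi\in(V_h)^5$, $$\int_{I_j}M\partial_t\mathbf z_h\cdot\boldsymbol\varphi\,dx-\int_{I_j}K\mathbf z_h\cdot\partial_x\boldsymbol\varphi\,dx+\big(\widehat{K\mathbf z_h}\cdot\boldsymbol\varphi^-\big)_{j+\frac12}-\big(\widehat{K\mathbf z_h}\cdot\boldsymbol\varphi^+\big)_{j-\frac12}=\int_{I_j}\nabla_{\mathbf z}S(\mathbf z_h)\cdot\boldsymbol\varphi\,dx,$$ with $\widehat{K\mathbf z_h}=K\{\mathbf z_h\}+A[\mathbf z_h]$ at each interface (equivalently, fluxes $\widehat{v_h}=\{v_h\}-\alpha_0[\phi_h]$, $\widehat{w_h}=\{w_h\}+\alpha_0[u_h]$,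 $\widehat{u_h}=\{u_h\}$, $\widehat{\phi_h}=\{\phi_h\}$). Then the discrete energy $$\mathcal E_h=-\frac12\int_\Omega u_h\big(u_h^2+\rho_h^2\big)dx+\alpha_0\sum_j\big([u_h][\phi_h]\big)_{j+\frac12}$$ is constant in time.
   Context: This is a DG discretization of the Camassa–Holm equation $u_t-u_{xxt}+3uu_x-2u_xu_{xx}-uu_{xxx}=0$ in the multi-symplectic form $M\mathbf z_t+K\mathbf z_x=\nabla_{\mathbf z}S(\mathbf z)$ above. Mesh and spaces: a one-dimensional domain $\Omega$ is partitioned into cells $I_j=[x_{j-1/2},x_{j+1/2}]$, $j=1,\dots,N$, with periodic boundary conditions (interface indices modulo $N$). For fixed $k\ge0$, $V_h=\{v\in L^2(\Omega): v|_{I_j}\text{ is a polynomial of degree}\le k\ \forall j\}$. For vector functions in $(V_h)^5$, superscripts $\pm$ at $x_{j+1/2}$ denote right/left limits, $\{\mathbf v\}=\frac12(\mathbf v^++\mathbf v^-)$, $[\mathbf v]=\mathbf v^+-\mathbf v^-$; subscript $j\pm\frac12$ denotes evaluation at $x_{j\pm1/2}$. *)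

theory Defs
  imports "HOL-Analysis.Analysis" "HOL-Computational_Algebra.Polynomial"
begin

text \<open>Components of z = (u, phi, rho, v, w) are indexed 0,1,2,3,4.
  Vectors in R^5 are functions nat => real (only indices < 5 matter),
  5x5 matrices are functions nat => nat => real.\<close>

definition dot5 :: "(nat \<Rightarrow> real) \<Rightarrow> (nat \<Rightarrow> real) \<Rightarrow> real" where
  "dot5 a b = (\<Sum>i<5. a i * b i)"

definition matvec5 :: "(nat \<Rightarrow> nat \<Rightarrow> real) \<Rightarrow> (nat \<Rightarrow> real) \<Rightarrow> nat \<Rightarrow> real" where
  "matvec5 P a = (\<lambda>i. \<Sum>j<5. P i j * a j)"

definition Mmat :: "nat \<Rightarrow> nat \<Rightarrow> real" where
  "Mmat i j = (if (i, j) = (0, 1) then 1/2 else if (i, j) = (0, 2) then -1/2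
     else if (i, j) = (1, 0) then -1/2 else if (i, j) = (2, 0) then 1/2 else 0)"

definition Kmat :: "nat \<Rightarrow> nat \<Rightarrow> real" where
  "Kmat i j = (if (i, j) = (0, 3) then -1 else if (i, j) = (1, 4) then 1
     else if (i, j) = (3, 0) then 1 else if (i, j) = (4, 1) then -1 else 0)"

definition Amat :: "real \<Rightarrow> nat \<Rightarrow> nat \<Rightarrow> real" where
  "Amat \<alpha>0 i j = (if (i, j) = (0, 1) \<or> (i, j) = (1, 0) then \<alpha>0 else 0)"

definition Sfun :: "(nat \<Rightarrow> real) \<Rightarrow> real" where
  "Sfun z = - z 4 * z 0 - z 0 ^ 3 / 2 - z 0 * z 2 ^ 2 / 2 + z 2 * z 3"

definition gradS :: "(nat \<Rightarrow> real) \<Rightarrow> nat \<Rightarrow> real" where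
  "gradS z i = deriv (\<lambda>s. Sfun (z(i := s))) (z i)"

text \<open>Mesh: interface points xs 0 < xs 1 < ... < xs N; cell j (j = 0..N-1) is
  [xs j, xs (j+1)].  Interface i (i = 0..N-1) is the right endpoint xs (i+1) of
  cell i; with periodic boundary conditions, its right neighbour is cell (i+1) mod N,
  whose left endpoint is xs ((i+1) mod N).
  A function of (V_h)^5 is given by zz :: nat => nat => real poly,
  zz c j = component c on cell j.\<close>

definition lim_left :: "(nat \<Rightarrow> real) \<Rightarrow> (nat \<Rightarrow> real poly) \<Rightarrow> nat \<Rightarrow> real" where
  "lim_left xs p i = poly (p i) (xs (Suc i))"

definition lim_right :: "nat \<Rightarrow> (nat \<Rightarrow> real) \<Rightarrow> (nat \<Rightarrow> real poly) \<Rightarrow> nat \<Rightarrow> real" where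
  "lim_right N xs p i = poly (p (Suc i mod N)) (xs (Suc i mod N))"

definition avg_at :: "nat \<Rightarrow> (nat \<Rightarrow> real) \<Rightarrow> (nat \<Rightarrow> real poly) \<Rightarrow> nat \<Rightarrow> real" where
  "avg_at N xs p i = (lim_right N xs p i + lim_left xs p i) / 2"

definition jump_at :: "nat \<Rightarrow> (nat \<Rightarrow> real) \<Rightarrow> (nat \<Rightarrow> real poly) \<Rightarrow> nat \<Rightarrow> real" where
  "jump_at N xs p i = lim_right N xs p i - lim_left xs p i"

definition flux :: "real \<Rightarrow> nat \<Rightarrow> (nat \<Rightarrow> real) \<Rightarrow> (nat \<Rightarrow> nat \<Rightarrow> real poly) \<Rightarrow> nat \<Rightarrow> nat \<Rightarrow> real" where
  "flux \<alpha>0 N xs zz i =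
     (\<lambda>c. matvec5 Kmat (\<lambda>d. avg_at N xs (zz d) i) c + matvec5 (Amat \<alpha>0) (\<lambda>d. jump_at N xs (zz d) i) c)"

definition dg_cell_eq ::
  "real \<Rightarrow> nat \<Rightarrow> (nat \<Rightarrow> real) \<Rightarrow> (nat \<Rightarrow> nat \<Rightarrow> real poly) \<Rightarrow> (nat \<Rightarrow> nat \<Rightarrow> real poly)
     \<Rightarrow> nat \<Rightarrow> (nat \<Rightarrow> real poly) \<Rightarrow> bool" where
  "dg_cell_eq \<alpha>0 N xs zz zt j q \<longleftrightarrow>
     integral {xs j..xs (Suc j)}
       (\<lambda>y. dot5 (matvec5 Mmat (\<lambda>d. poly (zt d j) y)) (\<lambda>c. poly (q c) y))
     - integral {xs j..xs (Suc j)}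
       (\<lambda>y. dot5 (matvec5 Kmat (\<lambda>d. poly (zz d j) y)) (\<lambda>c. poly (pderiv (q c)) y))
     + dot5 (flux \<alpha>0 N xs zz j) (\<lambda>c. poly (q c) (xs (Suc j)))
     - dot5 (flux \<alpha>0 N xs zz ((j + N - 1) mod N)) (\<lambda>c. poly (q c) (xs j))
     = integral {xs j..xs (Suc j)}
       (\<lambda>y. dot5 (gradS (\<lambda>d. poly (zz d j) y)) (\<lambda>c. poly (q c) y))"

definition energy :: "real \<Rightarrow> nat \<Rightarrow> (nat \<Rightarrow> real) \<Rightarrow> (nat \<Rightarrow> nat \<Rightarrow> real poly) \<Rightarrow> real" where
  "energy \<alpha>0 N xs zz =
     - 1/2 * (\<Sum>j<N. integral {xs j..xs (Suc j)}
        (\<lambda>y. poly (zz 0 j) y * (poly (zz 0 j) y ^ 2 + poly (zz 2 j) y ^ 2)))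
     + \<alpha>0 * (\<Sum>i<N. jump_at N xs (zz 0) i * jump_at N xs (zz 1) i)"

end

theory Submission
  imports Defs
begin


definition Ij :: "real \<Rightarrow> real \<Rightarrow> real poly \<Rightarrow> real" where
  "Ij a b r = integral {a..b} (poly r)"

lemma poly_integrable: fixes r :: "real poly" shows "poly r integrable_on {a..b}"
proof -
  have "continuous_on {a..b} (poly r)"
    by (intro continuous_at_imp_continuous_on ballI) simp
  then show ?thesis by (simp add: integrable_continuous_interval)
qed

lemma poly_fun_add: fixes r :: "real poly" shows "poly (r + s) = (\<lambda>y. poly r y + poly s y)" by auto
lemma poly_fun_diff: fixes r :: "real poly" shows "poly (r - s) = (\<lambda>y. poly r y - poly s y)" by (rule ext) simp
lemma poly_fun_minus: fixes r :: "real poly" shows "poly (- r) = (\<lambda>y. - poly r y)" by (rule ext) simp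
lemma poly_fun_smult: fixes r :: "real poly" shows "poly (smult c r) = (\<lambda>y. c * poly r y)" by auto

lemma Ij_add[simp]: "Ij a b (r + s) = Ij a b r + Ij a b s"
  unfolding Ij_def poly_fun_add by (simp add: integral_add poly_integrable)
lemma Ij_diff[simp]: "Ij a b (r - s) = Ij a b r - Ij a b s"
  unfolding Ij_def poly_fun_diff by (simp add: integral_diff poly_integrable)
lemma Ij_minus[simp]: "Ij a b (- r) = - Ij a b r"
  unfolding Ij_def poly_fun_minus by simp
lemma Ij_smult[simp]: "Ij a b (smult c r) = c * Ij a b r"
  unfolding Ij_def poly_fun_smult by simp
lemma Ij_zero[simp]: "Ij a b 0 = 0"
proof -
  have "poly 0 = (\<lambda>y. 0::real)" by (rule ext) simp
  then show ?thesis unfolding Ij_def by simp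
qed

lemma Ij_pderiv:
  assumes "a \<le> b" shows "Ij a b (pderiv r) = poly r b - poly r a"
proof -
  have "(poly (pderiv r) has_integral (poly r b - poly r a)) {a..b}"
    by (rule fundamental_theorem_of_calculus[OF assms])
       (auto simp: has_real_derivative_iff_has_vector_derivative[symmetric]
         intro: DERIV_subset[OF poly_DERIV])
  then show ?thesis unfolding Ij_def by (rule integral_unique)
qed

lemma poly_sum_le: fixes r :: "real poly" assumes "degree r \<le> n" shows "poly r x = (\<Sum>i\<le>n. coeff r i * x ^ i)"
  unfolding poly_altdef
  by (rule sum.mono_neutral_left) (use assms in \<open>auto simp: coeff_eq_0\<close>)

lemma Ij_coeff:
  assumes "degree r \<le> n"
  shows "Ij a b r = (\<Sum>i\<le>n. coeff r i * integral {a..b} (\<lambda>y. y ^ i))"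
proof -
  have "Ij a b r = integral {a..b} (\<lambda>y. \<Sum>i\<le>n. coeff r i * y ^ i)"
    unfolding Ij_def by (rule arg_cong[where f="integral {a..b}"]) (rule ext, rule poly_sum_le[OF assms])
  also have "\<dots> = (\<Sum>i\<le>n. integral {a..b} (\<lambda>y. coeff r i * y ^ i))"
    by (rule integral_sum) (auto intro!: integrable_continuous_interval continuous_intros)
  also have "\<dots> = (\<Sum>i\<le>n. coeff r i * integral {a..b} (\<lambda>y. y ^ i))"
    by simp
  finally show ?thesis .
qed

definition PD :: "real set \<Rightarrow> (real \<Rightarrow> real poly) \<Rightarrow> real poly \<Rightarrow> real \<Rightarrow> bool" where
  "PD T P P' t \<longleftrightarrow> (\<exists>n. (\<forall>s\<in>T. degree (P s) \<le> n) \<and> degree P' \<le> n \<and>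
     (\<forall>i. ((\<lambda>s. coeff (P s) i) has_real_derivative coeff P' i) (at t within T)))"

lemma PD_const: "PD T (\<lambda>s. g) 0 t"
  unfolding PD_def by (rule exI[of _ "degree g"]) auto

lemma PD_add:
  assumes "PD T P P' t" "PD T Q Q' t" shows "PD T (\<lambda>s. P s + Q s) (P' + Q') t"
proof -
  obtain n where n: "\<forall>s\<in>T. degree (P s) \<le> n" "degree P' \<le> n"
    "\<forall>i. ((\<lambda>s. coeff (P s) i) has_real_derivative coeff P' i) (at t within T)"
    using assms(1) unfolding PD_def by blast
  obtain m where m: "\<forall>s\<in>T. degree (Q s) \<le> m" "degree Q' \<le> m"
    "\<forall>i. ((\<lambda>s. coeff (Q s) i) has_real_derivative coeff Q' i) (at t within T)"
    using assms(2) unfolding PD_def by blast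
  show ?thesis unfolding PD_def
    apply (rule exI[of _ "max n m"])
    using n m by (auto intro!: derivative_eq_intros order.trans[OF degree_add_le_max] max.mono)
qed

lemma PD_smult:
  assumes "PD T P P' t" shows "PD T (\<lambda>s. smult c (P s)) (smult c P') t"
proof -
  obtain n where n: "\<forall>s\<in>T. degree (P s) \<le> n" "degree P' \<le> n"
    "\<forall>i. ((\<lambda>s. coeff (P s) i) has_real_derivative coeff P' i) (at t within T)"
    using assms(1) unfolding PD_def by blast
  show ?thesis unfolding PD_def
    apply (rule exI[of _ n])
    using n by (auto intro!: derivative_eq_intros order.trans[OF degree_smult_le])
qed

lemma PD_minus:
  assumes "PD T P P' t" shows "PD T (\<lambda>s. - P s) (- P') t"
  using PD_smult[OF assms, of "-1"] by simp

lemma PD_diff: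
  assumes "PD T P P' t" "PD T Q Q' t" shows "PD T (\<lambda>s. P s - Q s) (P' - Q') t"
  using PD_add[OF assms(1) PD_minus[OF assms(2)]] by simp

lemma PD_mult:
  assumes "t \<in> T" "PD T P P' t" "PD T Q Q' t"
  shows "PD T (\<lambda>s. P s * Q s) (P' * Q t + P t * Q') t"
proof -
  obtain n where n: "\<forall>s\<in>T. degree (P s) \<le> n" "degree P' \<le> n"
    "\<forall>i. ((\<lambda>s. coeff (P s) i) has_real_derivative coeff P' i) (at t within T)"
    using assms(2) unfolding PD_def by blast
  obtain m where m: "\<forall>s\<in>T. degree (Q s) \<le> m" "degree Q' \<le> m"
    "\<forall>i. ((\<lambda>s. coeff (Q s) i) has_real_derivative coeff Q' i) (at t within T)"
    using assms(3) unfolding PD_def by blast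
  have d1: "degree (P s * Q s) \<le> n + m" if "s \<in> T" for s
    using n(1) m(1) that by (meson add_mono degree_mult_le order.trans)
  have d2: "degree (P' * Q t + P t * Q') \<le> n + m"
    using n m assms(1)
    by (intro degree_add_le; meson add_mono degree_mult_le order.trans)
  have dd: "((\<lambda>s. coeff (P s * Q s) i) has_real_derivative coeff (P' * Q t + P t * Q') i) (at t within T)" for i
    unfolding coeff_mult coeff_add sum.distrib[symmetric]
    using n(3) m(3) by (auto intro!: derivative_eq_intros sum.cong simp: algebra_simps)
  show ?thesis unfolding PD_def using d1 d2 dd by blast
qed

lemma PD_poly:
  assumes "t \<in> T" "PD T P P' t"
  shows "((\<lambda>s. poly (P s) x) has_real_derivative poly P' x) (at t within T)"
proof -
  obtain n where n: "\<forall>s\<in>T. degree (P s) \<le> n" "degree P' \<le> n"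
    "\<forall>i. ((\<lambda>s. coeff (P s) i) has_real_derivative coeff P' i) (at t within T)"
    using assms(2) unfolding PD_def by blast
  have "((\<lambda>s. \<Sum>i\<le>n. coeff (P s) i * x ^ i) has_real_derivative (\<Sum>i\<le>n. coeff P' i * x ^ i)) (at t within T)"
    using n(3) by (auto intro!: derivative_eq_intros)
  then have "((\<lambda>s. \<Sum>i\<le>n. coeff (P s) i * x ^ i) has_real_derivative poly P' x) (at t within T)"
    using poly_sum_le[OF n(2)] by simp
  then show ?thesis
    by (rule has_field_derivative_transform_within[where d=1]) (use assms n poly_sum_le in auto)
qed

lemma PD_Ij:
  assumes "t \<in> T" "PD T P P' t"
  shows "((\<lambda>s. Ij a b (P s)) has_real_derivative Ij a b P') (at t within T)"
proof -
  obtain n where n: "\<forall>s\<in>T. degree (P s) \<le> n" "degree P' \<le> n"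
    "\<forall>i. ((\<lambda>s. coeff (P s) i) has_real_derivative coeff P' i) (at t within T)"
    using assms(2) unfolding PD_def by blast
  have "((\<lambda>s. \<Sum>i\<le>n. coeff (P s) i * integral {a..b} (\<lambda>y. y ^ i)) has_real_derivative
      (\<Sum>i\<le>n. coeff P' i * integral {a..b} (\<lambda>y. y ^ i))) (at t within T)"
    using n(3) by (auto intro!: derivative_eq_intros)
  then have "((\<lambda>s. \<Sum>i\<le>n. coeff (P s) i * integral {a..b} (\<lambda>y. y ^ i)) has_real_derivative Ij a b P') (at t within T)"
    using Ij_coeff[OF n(2)] by simp
  then show ?thesis
    by (rule has_field_derivative_transform_within[where d=1]) (use assms n Ij_coeff in auto)
qed



lemma sum5: "(\<Sum>i<(5::nat). f i) = f 0 + f 1 + f 2 + f 3 + (f 4 :: real)"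
  by (simp add: eval_nat_numeral)

lemma gradS_eq: "gradS z i = (if i = 0 then - z 4 - 3/2 * z 0 ^ 2 - z 2 ^ 2 / 2
   else if i = 2 then - z 0 * z 2 + z 3 else if i = 3 then z 2 else if i = 4 then - z 0 else 0)"
proof -
  consider "i = 0" | "i = 2" | "i = 3" | "i = 4" | "i \<noteq> 0 \<and> i \<noteq> 2 \<and> i \<noteq> 3 \<and> i \<noteq> 4" by blast
  then show ?thesis
  proof cases
    case 1
    have "DERIV (\<lambda>s. Sfun (z(i:=s))) (z i) :> - z 4 - 3/2 * z 0 ^ 2 - z 2 ^ 2 / 2"
      unfolding 1 Sfun_def by (auto intro!: derivative_eq_intros simp: power2_eq_square)
    then show ?thesis unfolding gradS_def using 1 by (simp add: DERIV_imp_deriv)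
  next
    case 2
    have "DERIV (\<lambda>s. Sfun (z(i:=s))) (z i) :> - z 0 * z 2 + z 3"
      unfolding 2 Sfun_def by (auto intro!: derivative_eq_intros simp: power2_eq_square)
    then show ?thesis unfolding gradS_def using 2 by (simp add: DERIV_imp_deriv)
  next
    case 3
    have "DERIV (\<lambda>s. Sfun (z(i:=s))) (z i) :> z 2"
      unfolding 3 Sfun_def by (auto intro!: derivative_eq_intros simp: power2_eq_square)
    then show ?thesis unfolding gradS_def using 3 by (simp add: DERIV_imp_deriv)
  next
    case 4
    have "DERIV (\<lambda>s. Sfun (z(i:=s))) (z i) :> - z 0"
      unfolding 4 Sfun_def by (auto intro!: derivative_eq_intros simp: power2_eq_square)
    then show ?thesis unfolding gradS_def using 4 by (simp add: DERIV_imp_deriv)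
  next
    case 5
    then have "(\<lambda>s. Sfun (z(i:=s))) = (\<lambda>s. Sfun z)" by (auto simp: Sfun_def)
    then show ?thesis unfolding gradS_def using 5 by simp
  qed
qed

lemma flux_eq: "flux \<alpha>0 N xs zz i c = (if c = 0 then - avg_at N xs (zz 3) i + \<alpha>0 * jump_at N xs (zz 1) i
  else if c = 1 then avg_at N xs (zz 4) i + \<alpha>0 * jump_at N xs (zz 0) i
  else if c = 3 then avg_at N xs (zz 0) i else if c = 4 then - avg_at N xs (zz 1) i else 0)"
  by (simp add: flux_def matvec5_def Kmat_def Amat_def sum5)

lemma dot5_sel: "dot5 a (\<lambda>c'. poly (if c' = c then g else 0) y) = (if c < 5 then a c * poly g y else 0)"
  by (auto simp: dot5_def sum5 eval_nat_numeral less_Suc_eq)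

lemma dot5_sel': "dot5 a (\<lambda>c'. poly (pderiv (if c' = c then g else 0)) y) = (if c < 5 then a c * poly (pderiv g) y else 0)"
  by (auto simp: dot5_def sum5 eval_nat_numeral less_Suc_eq)

lemma modN1: assumes "N \<ge> (1::nat)" "i < N" shows "(Suc i mod N + N - 1) mod N = i"
proof (cases "Suc i = N")
  case True then show ?thesis using assms by simp
next
  case False then have "Suc i < N" using assms by auto
  then show ?thesis using assms by simp
qed

lemma modN2: assumes "N \<ge> (1::nat)" "j < N" shows "Suc ((j + N - 1) mod N) mod N = j"
proof (cases "j = 0")
  case True then show ?thesis using assms by (simp add: mod_Suc)
next
  case False
  then have "(j + N - 1) mod N = j - 1" using assms
    by (metis Suc_pred' add.commute add_Suc_right diff_Suc_1 less_imp_diff_less mod_add_self1 mod_less not_gr_zero)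
  then show ?thesis using False assms by simp
qed

lemma reindex_mod:
  assumes "N \<ge> (1::nat)"
  shows "(\<Sum>j<N. h ((j + N - 1) mod N) j) = (\<Sum>i<N. h i (Suc i mod N) :: real)"
  by (rule sum.reindex_bij_witness[of _ "\<lambda>i. Suc i mod N" "\<lambda>j. (j + N - 1) mod N"])
     (use assms modN1 modN2 in auto)



locale cfg =
  fixes \<alpha>0 :: real and N k :: nat and xs :: "nat \<Rightarrow> real" and t0 t1 :: real
    and z zt :: "real \<Rightarrow> nat \<Rightarrow> nat \<Rightarrow> real poly"
  assumes N_pos: "N \<ge> 1"
    and mesh: "\<And>j. j < N \<Longrightarrow> xs j < xs (Suc j)"
    and Vh: "\<And>t c j. t \<in> {t0..t1} \<Longrightarrow> c < 5 \<Longrightarrow> j < N \<Longrightarrow> degree (z t c j) \<le> k"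
    and diff: "\<And>t c j i. t \<in> {t0..t1} \<Longrightarrow> c < 5 \<Longrightarrow> j < N \<Longrightarrow>
        ((\<lambda>s. coeff (z s c j) i) has_real_derivative coeff (zt t c j) i) (at t within {t0..t1})"
    and scheme: "\<And>t j q. t \<in> {t0..t1} \<Longrightarrow> j < N \<Longrightarrow> (\<forall>c<5. degree (q c) \<le> k) \<Longrightarrow>
        dg_cell_eq \<alpha>0 N xs (z t) (zt t) j q"
    and t01: "t0 < t1"
begin

lemma deriv_unique:
  assumes "t \<in> {t0..t1}" "(f has_real_derivative D1) (at t within {t0..t1})"
    "(f has_real_derivative D2) (at t within {t0..t1})"
  shows "D1 = D2"
  using vector_derivative_unique_within_closed_interval[of t0 t1 t f D1 D2] assms t01
  by (simp add: has_real_derivative_iff_has_vector_derivative)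

lemma deriv_zero:
  assumes "t \<in> {t0..t1}" "\<And>s. s \<in> {t0..t1} \<Longrightarrow> f s = 0"
    "(f has_real_derivative D) (at t within {t0..t1})"
  shows "D = 0"
proof -
  have "((\<lambda>s. 0) has_real_derivative 0) (at t within {t0..t1})" by simp
  then have "(f has_real_derivative 0) (at t within {t0..t1})"
    by (rule has_field_derivative_transform_within[where d=1]) (use assms in auto)
  then show ?thesis using deriv_unique assms by blast
qed

lemma zt_deg:
  assumes "t \<in> {t0..t1}" "c < 5" "j < N"
  shows "degree (zt t c j) \<le> k"
proof (rule degree_le, intro allI impI)
  fix i assume "k < i"
  then have "\<And>s. s \<in> {t0..t1} \<Longrightarrow> coeff (z s c j) i = 0"
    using Vh assms by (meson coeff_eq_0 le_less_trans)
  then show "coeff (zt t c j) i = 0"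
    using deriv_zero[OF assms(1) _ diff[OF assms]] by blast
qed

lemma PD_z:
  assumes "t \<in> {t0..t1}" "c < 5" "j < N"
  shows "PD {t0..t1} (\<lambda>s. z s c j) (zt t c j) t"
  unfolding PD_def using Vh zt_deg diff assms by blast

lemma PD_mult_const:
  assumes "t \<in> T" "PD T P P' t"
  shows "PD T (\<lambda>s. P s * g) (P' * g) t"
  using PD_mult[OF assms PD_const[of T g t]] by simp


lemma integral_eq_Ij: "(\<And>y. f y = poly r y) \<Longrightarrow> integral {a..b} f = Ij a b r"
  unfolding Ij_def by (rule arg_cong[where f="integral _"]) auto

lemma sch:
  assumes s: "s \<in> {t0..t1}" and j: "j < N" and g: "degree g \<le> k" and c: "c < 5"
  shows "integral {xs j..xs (Suc j)} (\<lambda>y. matvec5 Mmat (\<lambda>d. poly (zt s d j) y) c * poly g y)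
   - integral {xs j..xs (Suc j)} (\<lambda>y. matvec5 Kmat (\<lambda>d. poly (z s d j) y) c * poly (pderiv g) y)
   + flux \<alpha>0 N xs (z s) j c * poly g (xs (Suc j)) - flux \<alpha>0 N xs (z s) ((j+N-1) mod N) c * poly g (xs j)
   = integral {xs j..xs (Suc j)} (\<lambda>y. gradS (\<lambda>d. poly (z s d j) y) c * poly g y)"
proof -
  have "dg_cell_eq \<alpha>0 N xs (z s) (zt s) j (\<lambda>c'. if c' = c then g else 0)"
    by (rule scheme[OF s j]) (auto simp: g)
  then show ?thesis unfolding dg_cell_eq_def dot5_sel dot5_sel' using c by simp
qed

lemma eq0:
  assumes s: "s \<in> {t0..t1}" and j: "j < N" and g: "degree g \<le> k"
  shows "Ij (xs j) (xs (Suc j)) (smult (1/2) (zt s 1 j - zt s 2 j) * g) + Ij (xs j) (xs (Suc j)) (z s 3 j * pderiv g) + (- avg_at N xs (z s 3) j + \<alpha>0 * jump_at N xs (z s 1) j) * poly g (xs (Suc j)) - (- avg_at N xs (z s 3) ((j+N-1) mod N) + \<alpha>0 * jump_at N xs (z s 1) ((j+N-1) mod N)) * poly g (xs j) = Ij (xs j) (xs (Suc j)) ((- z s 4 j - smult (3/2) (z s 0 j * z s 0 j) - smult (1/2) (z s 2 j * z s 2 j)) * g)"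
proof -
  have i1: "integral {xs j..xs (Suc j)} (\<lambda>y. matvec5 Mmat (\<lambda>d. poly (zt s d j) y) 0 * poly g y) = Ij (xs j) (xs (Suc j)) (smult (1/2) (zt s 1 j - zt s 2 j) * g)"
    by (rule integral_eq_Ij) (simp add: matvec5_def Mmat_def sum5 algebra_simps)
  have i2: "integral {xs j..xs (Suc j)} (\<lambda>y. matvec5 Kmat (\<lambda>d. poly (z s d j) y) 0 * poly (pderiv g) y) = Ij (xs j) (xs (Suc j)) (- z s 3 j * pderiv g)"
    by (rule integral_eq_Ij) (simp add: matvec5_def Kmat_def sum5 algebra_simps)
  have i3: "integral {xs j..xs (Suc j)} (\<lambda>y. gradS (\<lambda>d. poly (z s d j) y) 0 * poly g y) = Ij (xs j) (xs (Suc j)) ((- z s 4 j - smult (3/2) (z s 0 j * z s 0 j) - smult (1/2) (z s 2 j * z s 2 j)) * g)"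
    by (rule integral_eq_Ij) (simp add: gradS_eq power2_eq_square algebra_simps)
  show ?thesis using sch[OF s j g, of 0] unfolding i1 i2 i3 flux_eq by (simp add: algebra_simps)
qed

lemma eq1:
  assumes s: "s \<in> {t0..t1}" and j: "j < N" and g: "degree g \<le> k"
  shows "- Ij (xs j) (xs (Suc j)) (smult (1/2) (zt s 0 j) * g) - Ij (xs j) (xs (Suc j)) (z s 4 j * pderiv g) + (avg_at N xs (z s 4) j + \<alpha>0 * jump_at N xs (z s 0) j) * poly g (xs (Suc j)) - (avg_at N xs (z s 4) ((j+N-1) mod N) + \<alpha>0 * jump_at N xs (z s 0) ((j+N-1) mod N)) * poly g (xs j) = 0"
proof -
  have i1: "integral {xs j..xs (Suc j)} (\<lambda>y. matvec5 Mmat (\<lambda>d. poly (zt s d j) y) 1 * poly g y) = Ij (xs j) (xs (Suc j)) (smult (-1/2) (zt s 0 j) * g)"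
    by (rule integral_eq_Ij) (simp add: matvec5_def Mmat_def sum5 algebra_simps)
  have i2: "integral {xs j..xs (Suc j)} (\<lambda>y. matvec5 Kmat (\<lambda>d. poly (z s d j) y) 1 * poly (pderiv g) y) = Ij (xs j) (xs (Suc j)) (z s 4 j * pderiv g)"
    by (rule integral_eq_Ij) (simp add: matvec5_def Kmat_def sum5 algebra_simps)
  have i3: "integral {xs j..xs (Suc j)} (\<lambda>y. gradS (\<lambda>d. poly (z s d j) y) 1 * poly g y) = Ij (xs j) (xs (Suc j)) (0)"
    by (rule integral_eq_Ij) (simp add: gradS_eq power2_eq_square algebra_simps)
  show ?thesis using sch[OF s j g, of 1] unfolding i1 i2 i3 flux_eq by (simp add: algebra_simps)
qed

lemma eq2:
  assumes s: "s \<in> {t0..t1}" and j: "j < N" and g: "degree g \<le> k"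
  shows "Ij (xs j) (xs (Suc j)) (smult (1/2) (zt s 0 j) * g) = Ij (xs j) (xs (Suc j)) ((- z s 0 j * z s 2 j + z s 3 j) * g)"
proof -
  have i1: "integral {xs j..xs (Suc j)} (\<lambda>y. matvec5 Mmat (\<lambda>d. poly (zt s d j) y) 2 * poly g y) = Ij (xs j) (xs (Suc j)) (smult (1/2) (zt s 0 j) * g)"
    by (rule integral_eq_Ij) (simp add: matvec5_def Mmat_def sum5 algebra_simps)
  have i2: "integral {xs j..xs (Suc j)} (\<lambda>y. matvec5 Kmat (\<lambda>d. poly (z s d j) y) 2 * poly (pderiv g) y) = Ij (xs j) (xs (Suc j)) (0)"
    by (rule integral_eq_Ij) (simp add: matvec5_def Kmat_def sum5 algebra_simps)
  have i3: "integral {xs j..xs (Suc j)} (\<lambda>y. gradS (\<lambda>d. poly (z s d j) y) 2 * poly g y) = Ij (xs j) (xs (Suc j)) ((- z s 0 j * z s 2 j + z s 3 j) * g)"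
    by (rule integral_eq_Ij) (simp add: gradS_eq power2_eq_square algebra_simps)
  show ?thesis using sch[OF s j g, of 2] unfolding i1 i2 i3 flux_eq by (simp add: algebra_simps)
qed

lemma eq3:
  assumes s: "s \<in> {t0..t1}" and j: "j < N" and g: "degree g \<le> k"
  shows "- Ij (xs j) (xs (Suc j)) (z s 0 j * pderiv g) + avg_at N xs (z s 0) j * poly g (xs (Suc j)) - avg_at N xs (z s 0) ((j+N-1) mod N) * poly g (xs j) = Ij (xs j) (xs (Suc j)) (z s 2 j * g)"
proof -
  have i1: "integral {xs j..xs (Suc j)} (\<lambda>y. matvec5 Mmat (\<lambda>d. poly (zt s d j) y) 3 * poly g y) = Ij (xs j) (xs (Suc j)) (0)"
    by (rule integral_eq_Ij) (simp add: matvec5_def Mmat_def sum5 algebra_simps)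
  have i2: "integral {xs j..xs (Suc j)} (\<lambda>y. matvec5 Kmat (\<lambda>d. poly (z s d j) y) 3 * poly (pderiv g) y) = Ij (xs j) (xs (Suc j)) (z s 0 j * pderiv g)"
    by (rule integral_eq_Ij) (simp add: matvec5_def Kmat_def sum5 algebra_simps)
  have i3: "integral {xs j..xs (Suc j)} (\<lambda>y. gradS (\<lambda>d. poly (z s d j) y) 3 * poly g y) = Ij (xs j) (xs (Suc j)) (z s 2 j * g)"
    by (rule integral_eq_Ij) (simp add: gradS_eq power2_eq_square algebra_simps)
  show ?thesis using sch[OF s j g, of 3] unfolding i1 i2 i3 flux_eq by (simp add: algebra_simps)
qed

lemma eq4:
  assumes s: "s \<in> {t0..t1}" and j: "j < N" and g: "degree g \<le> k"
  shows "Ij (xs j) (xs (Suc j)) (z s 1 j * pderiv g) - avg_at N xs (z s 1) j * poly g (xs (Suc j)) + avg_at N xs (z s 1) ((j+N-1) mod N) * poly g (xs j) = - Ij (xs j) (xs (Suc j)) (z s 0 j * g)"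
proof -
  have i1: "integral {xs j..xs (Suc j)} (\<lambda>y. matvec5 Mmat (\<lambda>d. poly (zt s d j) y) 4 * poly g y) = Ij (xs j) (xs (Suc j)) (0)"
    by (rule integral_eq_Ij) (simp add: matvec5_def Mmat_def sum5 algebra_simps)
  have i2: "integral {xs j..xs (Suc j)} (\<lambda>y. matvec5 Kmat (\<lambda>d. poly (z s d j) y) 4 * poly (pderiv g) y) = Ij (xs j) (xs (Suc j)) (- z s 1 j * pderiv g)"
    by (rule integral_eq_Ij) (simp add: matvec5_def Kmat_def sum5 algebra_simps)
  have i3: "integral {xs j..xs (Suc j)} (\<lambda>y. gradS (\<lambda>d. poly (z s d j) y) 4 * poly g y) = Ij (xs j) (xs (Suc j)) (- z s 0 j * g)"
    by (rule integral_eq_Ij) (simp add: gradS_eq power2_eq_square algebra_simps)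
  show ?thesis using sch[OF s j g, of 4] unfolding i1 i2 i3 flux_eq by (simp add: algebra_simps)
qed


lemma poly_z_deriv:
  assumes "t \<in> {t0..t1}" "c < 5" "j < N"
  shows "((\<lambda>s. poly (z s c j) x) has_real_derivative poly (zt t c j) x) (at t within {t0..t1})"
  by (rule PD_poly[OF assms(1) PD_z[OF assms]])

lemma sucmod: "Suc i mod N < N" using N_pos by simp
lemma jm_lt: "(j + N - 1) mod N < N" using N_pos by simp

lemma avg_deriv:
  assumes "t \<in> {t0..t1}" "c < 5" "i < N"
  shows "((\<lambda>s. avg_at N xs (z s c) i) has_real_derivative avg_at N xs (zt t c) i) (at t within {t0..t1})"
  unfolding avg_at_def lim_left_def lim_right_def
  by (intro DERIV_cdivide DERIV_add DERIV_diff poly_z_deriv assms sucmod)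

lemma jump_deriv:
  assumes "t \<in> {t0..t1}" "c < 5" "i < N"
  shows "((\<lambda>s. jump_at N xs (z s c) i) has_real_derivative jump_at N xs (zt t c) i) (at t within {t0..t1})"
  unfolding jump_at_def lim_left_def lim_right_def
  by (intro DERIV_cdivide DERIV_add DERIV_diff poly_z_deriv assms sucmod)

lemma Ij_z_deriv:
  assumes "t \<in> {t0..t1}" "c < 5" "j < N"
  shows "((\<lambda>s. Ij a b (z s c j * g)) has_real_derivative Ij a b (zt t c j * g)) (at t within {t0..t1})"
  by (rule PD_Ij[OF assms(1) PD_mult_const[OF assms(1) PD_z[OF assms]]])

lemma eq3d:
  assumes t: "t \<in> {t0..t1}" and j: "j < N" and g: "degree g \<le> k"
  shows "- Ij (xs j) (xs (Suc j)) (zt t 0 j * pderiv g) + avg_at N xs (zt t 0) j * poly g (xs (Suc j)) - avg_at N xs (zt t 0) ((j+N-1) mod N) * poly g (xs j) - Ij (xs j) (xs (Suc j)) (zt t 2 j * g) = 0"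
proof (rule deriv_zero[OF t])
  fix s assume "s \<in> {t0..t1}"
  from eq3[OF this j g] show "- Ij (xs j) (xs (Suc j)) (z s 0 j * pderiv g) + avg_at N xs (z s 0) j * poly g (xs (Suc j)) - avg_at N xs (z s 0) ((j+N-1) mod N) * poly g (xs j) - Ij (xs j) (xs (Suc j)) (z s 2 j * g) = 0"
    by simp
next
  show "((\<lambda>s. - Ij (xs j) (xs (Suc j)) (z s 0 j * pderiv g) + avg_at N xs (z s 0) j * poly g (xs (Suc j)) - avg_at N xs (z s 0) ((j+N-1) mod N) * poly g (xs j) - Ij (xs j) (xs (Suc j)) (z s 2 j * g)) has_real_derivative 
    - Ij (xs j) (xs (Suc j)) (zt t 0 j * pderiv g) + avg_at N xs (zt t 0) j * poly g (xs (Suc j)) - avg_at N xs (zt t 0) ((j+N-1) mod N) * poly g (xs j) - Ij (xs j) (xs (Suc j)) (zt t 2 j * g)) (at t within {t0..t1})"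
    by (intro DERIV_add DERIV_diff DERIV_minus DERIV_cmult_right Ij_z_deriv avg_deriv t j jm_lt) auto
qed

lemma eq4d:
  assumes t: "t \<in> {t0..t1}" and j: "j < N" and g: "degree g \<le> k"
  shows "Ij (xs j) (xs (Suc j)) (zt t 1 j * pderiv g) - avg_at N xs (zt t 1) j * poly g (xs (Suc j)) + avg_at N xs (zt t 1) ((j+N-1) mod N) * poly g (xs j) + Ij (xs j) (xs (Suc j)) (zt t 0 j * g) = 0"
proof (rule deriv_zero[OF t])
  fix s assume "s \<in> {t0..t1}"
  from eq4[OF this j g] show "Ij (xs j) (xs (Suc j)) (z s 1 j * pderiv g) - avg_at N xs (z s 1) j * poly g (xs (Suc j)) + avg_at N xs (z s 1) ((j+N-1) mod N) * poly g (xs j) + Ij (xs j) (xs (Suc j)) (z s 0 j * g) = 0"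
    by simp
next
  show "((\<lambda>s. Ij (xs j) (xs (Suc j)) (z s 1 j * pderiv g) - avg_at N xs (z s 1) j * poly g (xs (Suc j)) + avg_at N xs (z s 1) ((j+N-1) mod N) * poly g (xs j) + Ij (xs j) (xs (Suc j)) (z s 0 j * g)) has_real_derivative 
    Ij (xs j) (xs (Suc j)) (zt t 1 j * pderiv g) - avg_at N xs (zt t 1) j * poly g (xs (Suc j)) + avg_at N xs (zt t 1) ((j+N-1) mod N) * poly g (xs j) + Ij (xs j) (xs (Suc j)) (zt t 0 j * g)) (at t within {t0..t1})"
    by (intro DERIV_add DERIV_diff DERIV_minus DERIV_cmult_right Ij_z_deriv avg_deriv t j jm_lt) auto
qed


definition Gb :: "real \<Rightarrow> nat \<Rightarrow> real \<Rightarrow> real \<Rightarrow> real \<Rightarrow> real \<Rightarrow> real" where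
  "Gb t i x0 x1 x3 x4 = (- avg_at N xs (z t 3) i + \<alpha>0 * jump_at N xs (z t 1) i) * x0
     + (avg_at N xs (z t 4) i + \<alpha>0 * jump_at N xs (z t 0) i) * x1
     - avg_at N xs (zt t 0) i * x3 + avg_at N xs (zt t 1) i * x4 + x3 * x0 - x4 * x1"

definition DE :: "real \<Rightarrow> nat \<Rightarrow> real poly" where
  "DE t j = zt t 0 j * (z t 0 j * z t 0 j + z t 2 j * z t 2 j)
     + z t 0 j * ((zt t 0 j * z t 0 j + z t 0 j * zt t 0 j) + (zt t 2 j * z t 2 j + z t 2 j * zt t 2 j))"

lemma cell:
  assumes t: "t \<in> {t0..t1}" and j: "j < N"
  shows "- 1/2 * Ij (xs j) (xs (Suc j)) (DE t j) =
    Gb t j (poly (zt t 0 j) (xs (Suc j))) (poly (zt t 1 j) (xs (Suc j))) (poly (z t 3 j) (xs (Suc j))) (poly (z t 4 j) (xs (Suc j)))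
  - Gb t ((j + N - 1) mod N) (poly (zt t 0 j) (xs j)) (poly (zt t 1 j) (xs j)) (poly (z t 3 j) (xs j)) (poly (z t 4 j) (xs j))"
proof -
  note d = zt_deg[OF t _ j] Vh[OF t _ j]
  note e0 = eq0[OF t j d(1)[of 0]]
  note e1 = eq1[OF t j d(1)[of 1]]
  note e2 = eq2[OF t j d(1)[of 2]]
  note e3 = eq3d[OF t j d(2)[of 3]]
  note e4 = eq4d[OF t j d(2)[of 4]]
  have ab: "xs j \<le> xs (Suc j)" using mesh[OF j] by simp
  note f1 = Ij_pderiv[OF ab, of "z t 3 j * zt t 0 j"]
  note f2 = Ij_pderiv[OF ab, of "z t 4 j * zt t 1 j"]
  let ?u = "z t 0 j" and ?p = "z t 1 j" and ?r = "z t 2 j" and ?v = "z t 3 j" and ?w = "z t 4 j"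
  let ?u' = "zt t 0 j" and ?p' = "zt t 1 j" and ?r' = "zt t 2 j"
  have pid: "smult (1/2) (DE t j) =
     smult (1/2) (?p' - ?r') * ?u' + ?v * pderiv ?u' - (- ?w - smult (3/2) (?u * ?u) - smult (1/2) (?r * ?r)) * ?u'
     + smult (1/2) ?u' * ?r' - (- ?u * ?r + ?v) * ?r'
     - smult (1/2) ?u' * ?p' - ?w * pderiv ?p'
     + ?u' * pderiv ?v + ?r' * ?v
     - ?p' * pderiv ?w - ?u' * ?w
     - pderiv (?v * ?u') + pderiv (?w * ?p')"
    unfolding poly_eq_poly_eq_iff[symmetric] DE_def
    by (rule ext) (simp add: pderiv_mult algebra_simps)
  have "1/2 * Ij (xs j) (xs (Suc j)) (DE t j) = Ij (xs j) (xs (Suc j)) (smult (1/2) (DE t j))" by simp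
  also have "\<dots> = Ij (xs j) (xs (Suc j)) (smult (1/2) (?p' - ?r') * ?u') + Ij (xs j) (xs (Suc j)) (?v * pderiv ?u') - Ij (xs j) (xs (Suc j)) ((- ?w - smult (3/2) (?u * ?u) - smult (1/2) (?r * ?r)) * ?u')
     + Ij (xs j) (xs (Suc j)) (smult (1/2) ?u' * ?r') - Ij (xs j) (xs (Suc j)) ((- ?u * ?r + ?v) * ?r')
     - Ij (xs j) (xs (Suc j)) (smult (1/2) ?u' * ?p') - Ij (xs j) (xs (Suc j)) (?w * pderiv ?p')
     + Ij (xs j) (xs (Suc j)) (?u' * pderiv ?v) + Ij (xs j) (xs (Suc j)) (?r' * ?v)
     - Ij (xs j) (xs (Suc j)) (?p' * pderiv ?w) - Ij (xs j) (xs (Suc j)) (?u' * ?w)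
     - Ij (xs j) (xs (Suc j)) (pderiv (?v * ?u')) + Ij (xs j) (xs (Suc j)) (pderiv (?w * ?p'))"
    unfolding pid by (simp only: Ij_add Ij_diff)
  finally have main: "1/2 * Ij (xs j) (xs (Suc j)) (DE t j) = \<dots>" .
  have c3: "Ij (xs j) (xs (Suc j)) (?r' * ?v) = Ij (xs j) (xs (Suc j)) (?v * ?r')" by (simp add: mult.commute)
  have c4: "Ij (xs j) (xs (Suc j)) (?u' * ?w) = Ij (xs j) (xs (Suc j)) (?w * ?u')" by (simp add: mult.commute)
  have c3': "Ij (xs j) (xs (Suc j)) (?u' * pderiv ?v) = Ij (xs j) (xs (Suc j)) (pderiv ?v * ?u')" by (simp add: mult.commute)
  show ?thesis using main e0 e1 e2 e3 e4 f1 f2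
    unfolding Gb_def by (simp add: algebra_simps)
qed


lemma energy_eq:
  assumes s: "s \<in> {t0..t1}"
  shows "energy \<alpha>0 N xs (z s) = - 1/2 * (\<Sum>j<N. Ij (xs j) (xs (Suc j)) (z s 0 j * (z s 0 j * z s 0 j + z s 2 j * z s 2 j)))
     + \<alpha>0 * (\<Sum>i<N. jump_at N xs (z s 0) i * jump_at N xs (z s 1) i)"
  unfolding energy_def
  by (intro arg_cong2[where f="(+)"] arg_cong2[where f="(*)"] refl sum.cong integral_eq_Ij)
     (simp add: power2_eq_square)

lemma iface:
  "Gb t i (lim_left xs (zt t 0) i) (lim_left xs (zt t 1) i) (lim_left xs (z t 3) i) (lim_left xs (z t 4) i)
   - Gb t i (lim_right N xs (zt t 0) i) (lim_right N xs (zt t 1) i) (lim_right N xs (z t 3) i) (lim_right N xs (z t 4) i)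
   = - \<alpha>0 * (jump_at N xs (zt t 0) i * jump_at N xs (z t 1) i + jump_at N xs (zt t 1) i * jump_at N xs (z t 0) i)"
  unfolding Gb_def avg_at_def jump_at_def by (simp add: field_simps)

lemma energy_deriv0:
  assumes t: "t \<in> {t0..t1}"
  shows "((\<lambda>s. energy \<alpha>0 N xs (z s)) has_real_derivative 0) (at t within {t0..t1})"
proof -
  have PDE: "PD {t0..t1} (\<lambda>s. z s 0 j * (z s 0 j * z s 0 j + z s 2 j * z s 2 j)) (DE t j) t" if j: "j < N" for j
    unfolding DE_def
    by (intro PD_mult PD_add PD_z t j) auto
  have D: "((\<lambda>s. - 1/2 * (\<Sum>j<N. Ij (xs j) (xs (Suc j)) (z s 0 j * (z s 0 j * z s 0 j + z s 2 j * z s 2 j)))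
     + \<alpha>0 * (\<Sum>i<N. jump_at N xs (z s 0) i * jump_at N xs (z s 1) i)) has_real_derivative
     - 1/2 * (\<Sum>j<N. Ij (xs j) (xs (Suc j)) (DE t j))
     + \<alpha>0 * (\<Sum>i<N. jump_at N xs (zt t 0) i * jump_at N xs (z t 1) i + jump_at N xs (zt t 1) i * jump_at N xs (z t 0) i)) (at t within {t0..t1})"
    by (intro DERIV_add DERIV_cmult DERIV_sum DERIV_mult PD_Ij[OF t] PDE jump_deriv t) auto
  have "- 1/2 * (\<Sum>j<N. Ij (xs j) (xs (Suc j)) (DE t j)) = (\<Sum>j<N. - 1/2 * Ij (xs j) (xs (Suc j)) (DE t j))"
    by (simp add: sum_distrib_left)
  also have "\<dots> = (\<Sum>j<N. Gb t j (lim_left xs (zt t 0) j) (lim_left xs (zt t 1) j) (lim_left xs (z t 3) j) (lim_left xs (z t 4) j))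
     - (\<Sum>j<N. Gb t ((j + N - 1) mod N) (poly (zt t 0 j) (xs j)) (poly (zt t 1 j) (xs j)) (poly (z t 3 j) (xs j)) (poly (z t 4 j) (xs j)))"
    unfolding sum_subtractf[symmetric] lim_left_def by (rule sum.cong[OF refl], rule cell[OF t], simp)
  also have "(\<Sum>j<N. Gb t ((j + N - 1) mod N) (poly (zt t 0 j) (xs j)) (poly (zt t 1 j) (xs j)) (poly (z t 3 j) (xs j)) (poly (z t 4 j) (xs j)))
     = (\<Sum>i<N. Gb t i (lim_right N xs (zt t 0) i) (lim_right N xs (zt t 1) i) (lim_right N xs (z t 3) i) (lim_right N xs (z t 4) i))"
    unfolding lim_right_def
    by (rule reindex_mod[OF N_pos, where h="\<lambda>i j. Gb t i (poly (zt t 0 j) (xs j)) (poly (zt t 1 j) (xs j)) (poly (z t 3 j) (xs j)) (poly (z t 4 j) (xs j))"])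
  also have "(\<Sum>j<N. Gb t j (lim_left xs (zt t 0) j) (lim_left xs (zt t 1) j) (lim_left xs (z t 3) j) (lim_left xs (z t 4) j))
     - (\<Sum>i<N. Gb t i (lim_right N xs (zt t 0) i) (lim_right N xs (zt t 1) i) (lim_right N xs (z t 3) i) (lim_right N xs (z t 4) i))
     = (\<Sum>i<N. - \<alpha>0 * (jump_at N xs (zt t 0) i * jump_at N xs (z t 1) i + jump_at N xs (zt t 1) i * jump_at N xs (z t 0) i))"
    unfolding sum_subtractf[symmetric] iface ..
  finally have Z: "- 1/2 * (\<Sum>j<N. Ij (xs j) (xs (Suc j)) (DE t j))
     + \<alpha>0 * (\<Sum>i<N. jump_at N xs (zt t 0) i * jump_at N xs (z t 1) i + jump_at N xs (zt t 1) i * jump_at N xs (z t 0) i) = 0"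
    by (simp add: sum_distrib_left sum_negf)
  note D0 = D[unfolded Z]
  show ?thesis
    by (rule has_field_derivative_transform_within[OF D0, where d=1]) (use t energy_eq in auto)
qed

lemma energy_const: "\<forall>t \<in> {t0..t1}. energy \<alpha>0 N xs (z t) = energy \<alpha>0 N xs (z t0)"
proof -
  obtain c where "\<forall>x\<in>{t0..t1}. energy \<alpha>0 N xs (z x) = c"
    using has_field_derivative_zero_constant[of "{t0..t1}" "\<lambda>s. energy \<alpha>0 N xs (z s)"] energy_deriv0
    by auto
  moreover have "t0 \<in> {t0..t1}" using t01 by simp
  ultimately show ?thesis by simp
qed

end

theorem proposition4p4:
  fixes \<alpha>0 :: real and N k :: nat and xs :: "nat \<Rightarrow> real" and t0 t1 :: real
    and z zt :: "real \<Rightarrow> nat \<Rightarrow> nat \<Rightarrow> real poly"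
  assumes N_pos: "N \<ge> 1"
    and mesh: "\<And>j. j < N \<Longrightarrow> xs j < xs (Suc j)"
    and Vh: "\<And>t c j. t \<in> {t0..t1} \<Longrightarrow> c < 5 \<Longrightarrow> j < N \<Longrightarrow> degree (z t c j) \<le> k"
    and diff: "\<And>t c j i. t \<in> {t0..t1} \<Longrightarrow> c < 5 \<Longrightarrow> j < N \<Longrightarrow>
        ((\<lambda>s. coeff (z s c j) i) has_real_derivative coeff (zt t c j) i) (at t within {t0..t1})"
    and cont: "\<And>c j i. c < 5 \<Longrightarrow> j < N \<Longrightarrow> continuous_on {t0..t1} (\<lambda>t. coeff (zt t c j) i)"
    and scheme: "\<And>t j q. t \<in> {t0..t1} \<Longrightarrow> j < N \<Longrightarrow> (\<forall>c<5. degree (q c) \<le> k) \<Longrightarrow>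
        dg_cell_eq \<alpha>0 N xs (z t) (zt t) j q"
  shows "\<forall>t \<in> {t0..t1}. energy \<alpha>0 N xs (z t) = energy \<alpha>0 N xs (z t0)"
proof (cases "t0 < t1")
  case True
  interpret cfg \<alpha>0 N k xs t0 t1 z zt
    by (unfold_locales) (use N_pos mesh Vh diff scheme True in auto)
  show ?thesis by (rule energy_const)
next
  case False
  have "t = t0" if "t \<in> {t0..t1}" for t using False that by auto
  then show ?thesis by metis
qed

end
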